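(* In the model and protocol $\mathrm{OciorABA}$ described in the context, with $n\ge 3t+1$, if every honest node receives an input message, then every honest node eventually outputs a value and terminates.
   Context: Model: there are $n$ nodes $\mathrm{Node}_1,\dots,\mathrm{Node}_n$ in an asynchronous network (every message sent between honest nodes is eventually delivered, with arbitrary adversarial delay). An adaptive adversary may corrupt at most $t$ nodes in total; $\mathcal F\subseteq[1:n]$ denotes the set of dishonest nodes; $n\ge 3t+1$. The symbol $\bot$ denotes "missing"; for a vector $v\in\{0,1,\bot\}^n$ let $\mathcal M(v)=\{j\in[1:n]: v[j]\neq\bot\}$. Primitives used as black boxes: (RBC) For each $j\in[1:n]$ a reliable broadcast instance $\mathrm{RBC}_j$ with leader $\mathrm{Node}_j$, satisfying Consistency (two honest outputs are equal), Validity (if the leader is honest and inputs $w$, every honest node eventually outputs $w$), and Totality (if one honest node outputs a value, every honest node eventually outputs a value). (APVA) An asynchronous partial vector agreement instance: each honest $\mathrm{Node}_i$ holds an input vector $a_i\in\{0,1,\bot\}^n$, initially all $\bot$, whose entries may over time change from $\bot$ to a value in $\{0,1\}$ (and are then fixed); each node outputs at most one vector in $\{0,1,\bot\}^n$. It satisfies: Consistency (if an honest node outputs $v$, every honest node eventually outputs $v$); Validity (if an honest node outputs $v$, then for every $j$ with $v[j]\neq\bot$ some honest $\mathrm{Node}_i$ has input $a_i[j]=v[j]$, and $|\mathcal M(v)|\ge n-t$); Termination (if there is a set of at least $n-t$ positions at which all honest nodes have non-missing input entries, then every honest node eventually outputs a vector and terminates). (Erasure code) An $(n,t+1)$ erasure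 code: $\mathrm{Enc}(w)=(\mathrm{Enc}_1(w),\dots,\mathrm{Enc}_n(w))$ and $\mathrm{Dec}$ with $\mathrm{Dec}(\{\mathrm{Enc}_j(w)\}_{j\in K})=w$ for every $K\subseteq[1:n]$, $|K|=t+1$. Protocol $\mathrm{OciorABA}$, code for an honest $\mathrm{Node}_i$ with input message $w_i$: (1) Compute $(y^{(i)}_1,\dots,y^{(i)}_n)=\mathrm{Enc}(w_i)$ and input $y^{(i)}_i$ into $\mathrm{RBC}_i$ (as leader). (2) Upon delivery of $y^{(j)}_j$ from $\mathrm{RBC}_j$ (after step (1)), set $a_i[j]=1$ if $y^{(j)}_j=y^{(i)}_j$ and $a_i[j]=0$ otherwise, and pass $a_i[j]$ into APVA as the $j$-th entry of its input vector. (3) Upon APVA outputting $v$: let $S=\{j: v[j]=1\}$. If $|S|<t+1$, output a default value $\bot$ and terminate. Otherwise let $K$ be the $t+1$ smallest elements of $S$, wait for delivery of $y^{(j)}_j$ from $\mathrm{RBC}_j$ for all $j\in K$, output $\mathrm{Dec}(\{y^{(j)}_j\}_{j\in K})$ and terminate. *)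

theory Defs
  imports Main
begin

text \<open>
Time is discrete (nat) and only used to express
"eventually". Nodes are indexed by {1..n}; F is the set of nodes that are
(ever) corrupted by the adaptive adversary, so honest nodes are {1..n} - F.

  rbc tau i j = Some y : by time tau, Node_i has delivered y from RBC_j.
  apva tau i = Some v  : by time tau, Node_i has output vector v from APVA.
  Vectors in {0,1,bot}^n are functions nat => bool option
  (None = bot, Some True = 1, Some False = 0).
\<close>

definition honest :: "nat \<Rightarrow> nat set \<Rightarrow> nat set" where
  "honest n F = {1..n} - F"

definition nonmissing :: "nat \<Rightarrow> (nat \<Rightarrow> bool option) \<Rightarrow> nat set" where
  "nonmissing n v = {j \<in> {1..n}. v j \<noteq> None}"

definition erasure_code ::
  "nat \<Rightarrow> nat \<Rightarrow> ('w \<Rightarrow> nat \<Rightarrow> 's) \<Rightarrow> ((nat \<Rightarrow> 's option) \<Rightarrow> 'w) \<Rightarrow> bool" where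
  "erasure_code n t Enc Dec \<longleftrightarrow>
     (\<forall>w K. K \<subseteq> {1..n} \<and> card K = t + 1 \<longrightarrow>
        Dec (\<lambda>j. if j \<in> K then Some (Enc w j) else None) = w)"

text \<open>RBC properties; the honest leader j inputs ldr_in j (here Enc_j(w_j)).
Outputs are single-shot: once delivered, fixed.\<close>
definition rbc_props ::
  "nat \<Rightarrow> nat set \<Rightarrow> (nat \<Rightarrow> 's) \<Rightarrow> (nat \<Rightarrow> nat \<Rightarrow> nat \<Rightarrow> 's option) \<Rightarrow> bool" where
  "rbc_props n F ldr_in rbc \<longleftrightarrow>
     (\<forall>i\<in>honest n F. \<forall>j\<in>{1..n}. \<forall>\<tau> \<tau>' y. rbc \<tau> i j = Some y \<and> \<tau> \<le> \<tau>' \<longrightarrow> rbc \<tau>' i j = Some y) \<and>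
     (\<forall>j\<in>{1..n}. \<forall>i\<in>honest n F. \<forall>i'\<in>honest n F. \<forall>\<tau> \<tau>' y y'.
        rbc \<tau> i j = Some y \<and> rbc \<tau>' i' j = Some y' \<longrightarrow> y = y') \<and>
     (\<forall>j\<in>honest n F. \<forall>i\<in>honest n F. \<exists>\<tau>. rbc \<tau> i j = Some (ldr_in j)) \<and>
     (\<forall>j\<in>{1..n}. (\<exists>i\<in>honest n F. \<exists>\<tau>. rbc \<tau> i j \<noteq> None) \<longrightarrow>
        (\<forall>i\<in>honest n F. \<exists>\<tau>. rbc \<tau> i j \<noteq> None))"

text \<open>APVA properties with respect to the (time-varying) honest inputs
a tau i j (entries only change from None to a fixed value).\<close>
definition apva_props ::
  "nat \<Rightarrow> nat \<Rightarrow> nat set \<Rightarrow> (nat \<Rightarrow> nat \<Rightarrow> nat \<Rightarrow> bool option)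
     \<Rightarrow> (nat \<Rightarrow> nat \<Rightarrow> (nat \<Rightarrow> bool option) option) \<Rightarrow> bool" where
  "apva_props n t F a apva \<longleftrightarrow>
     (\<forall>i\<in>honest n F. \<forall>\<tau> \<tau>' v. apva \<tau> i = Some v \<and> \<tau> \<le> \<tau>' \<longrightarrow> apva \<tau>' i = Some v) \<and>
     (\<forall>i\<in>honest n F. \<forall>\<tau> v. apva \<tau> i = Some v \<longrightarrow>
        (\<forall>i'\<in>honest n F. \<exists>\<tau>'. apva \<tau>' i' = Some v)) \<and>
     (\<forall>i\<in>honest n F. \<forall>\<tau> v. apva \<tau> i = Some v \<longrightarrow>
        (\<forall>j. j \<notin> {1..n} \<longrightarrow> v j = None) \<and>
        (\<forall>j\<in>{1..n}. v j \<noteq> None \<longrightarrow> (\<exists>i'\<in>honest n F. \<exists>\<tau>'. a \<tau>' i' j = v j)) \<and>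
        card (nonmissing n v) \<ge> n - t) \<and>
     ((\<exists>P \<subseteq> {1..n}. card P \<ge> n - t \<and>
         (\<forall>i\<in>honest n F. \<forall>j\<in>P. \<exists>\<tau>. a \<tau> i j \<noteq> None)) \<longrightarrow>
        (\<forall>i\<in>honest n F. \<exists>\<tau>. apva \<tau> i \<noteq> None))"

definition ocior_input ::
  "nat \<Rightarrow> ('w \<Rightarrow> nat \<Rightarrow> 's) \<Rightarrow> (nat \<Rightarrow> 'w) \<Rightarrow> (nat \<Rightarrow> nat \<Rightarrow> nat \<Rightarrow> 's option)
     \<Rightarrow> nat \<Rightarrow> nat \<Rightarrow> nat \<Rightarrow> bool option" where
  "ocior_input n Enc w rbc \<tau> i j =
     (if j \<in> {1..n} then map_option (\<lambda>y. y = Enc (w i) j) (rbc \<tau> i j) else None)"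

definition smallest :: "nat \<Rightarrow> nat set \<Rightarrow> nat set" where
  "smallest k S = {j \<in> S. card {l \<in> S. l < j} < k}"

text \<open>Step (3): output of honest Node_i by time tau.
None = no output yet; Some None = default output bot; Some (Some m) = decoded m.\<close>
definition ocior_output ::
  "nat \<Rightarrow> nat \<Rightarrow> ((nat \<Rightarrow> 's option) \<Rightarrow> 'w) \<Rightarrow> (nat \<Rightarrow> nat \<Rightarrow> nat \<Rightarrow> 's option)
     \<Rightarrow> (nat \<Rightarrow> nat \<Rightarrow> (nat \<Rightarrow> bool option) option) \<Rightarrow> nat \<Rightarrow> nat \<Rightarrow> 'w option option" where
  "ocior_output n t Dec rbc apva \<tau> i =
     (case apva \<tau> i of
        None \<Rightarrow> None
      | Some v \<Rightarrow>
          (let S = {j \<in> {1..n}. v j = Some True} in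
           if card S < t + 1 then Some None
           else (let K = smallest (t + 1) S in
                 if (\<forall>j\<in>K. rbc \<tau> i j \<noteq> None)
                 then Some (Some (Dec (\<lambda>j. if j \<in> K then rbc \<tau> i j else None)))
                 else None)))"

end

theory Submission
  imports Defs
begin

lemma finite_sync:
  fixes \<tau>0 :: nat and P :: "nat \<Rightarrow> 'a \<Rightarrow> bool"
  assumes "finite K" "\<forall>j\<in>K. \<exists>\<tau>. P \<tau> j"
    and mono: "\<And>j \<tau> \<tau>'. j \<in> K \<Longrightarrow> P \<tau> j \<Longrightarrow> \<tau> \<le> \<tau>' \<Longrightarrow> P \<tau>' j"
  shows "\<exists>\<tau>. \<tau> \<ge> \<tau>0 \<and> (\<forall>j\<in>K. P \<tau> j)"
proof -
  obtain f where f: "\<forall>j\<in>K. P (f j) j" using assms(2) by metis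
  define T where "T = max \<tau>0 (Max (insert 0 (f ` K)))"
  have "\<forall>j\<in>K. f j \<le> T" unfolding T_def using assms(1) by (simp add: le_max_iff_disj)
  then have "\<forall>j\<in>K. P T j" using f mono by blast
  moreover have "T \<ge> \<tau>0" unfolding T_def by simp
  ultimately show ?thesis by blast
qed

lemma out_eq:
  "apva \<tau> i = Some v \<Longrightarrow> \<not> card {j\<in>{1..n}. v j = Some True} < t+1 \<Longrightarrow>
   \<forall>j\<in>smallest (t+1) {j\<in>{1..n}. v j = Some True}. rbc \<tau> i j \<noteq> None \<Longrightarrow>
   \<exists>\<tau> out. ocior_output n t Dec rbc apva \<tau> i = Some out"
  by (rule exI[of _ \<tau>]) (simp add: ocior_output_def Let_def)

theorem theorem4:
  fixes n t :: nat and F :: "nat set"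
    and w :: "nat \<Rightarrow> 'w"
    and Enc :: "'w \<Rightarrow> nat \<Rightarrow> 's" and Dec :: "(nat \<Rightarrow> 's option) \<Rightarrow> 'w"
    and rbc :: "nat \<Rightarrow> nat \<Rightarrow> nat \<Rightarrow> 's option"
    and apva :: "nat \<Rightarrow> nat \<Rightarrow> (nat \<Rightarrow> bool option) option"
  assumes "n \<ge> 3 * t + 1"
    and "F \<subseteq> {1..n}" and "card F \<le> t"
    and "erasure_code n t Enc Dec"
    and "rbc_props n F (\<lambda>j. Enc (w j) j) rbc"
    and "apva_props n t F (ocior_input n Enc w rbc) apva"
  shows "\<forall>i\<in>honest n F. \<exists>\<tau> out. ocior_output n t Dec rbc apva \<tau> i = Some out"
proof
  fix i assume hi: "i \<in> honest n F"
  note R1 = assms(5)[unfolded rbc_props_def, THEN conjunct1]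
  note R3 = assms(5)[unfolded rbc_props_def, THEN conjunct2, THEN conjunct2, THEN conjunct1]
  note R4 = assms(5)[unfolded rbc_props_def, THEN conjunct2, THEN conjunct2, THEN conjunct2]
  note A1 = assms(6)[unfolded apva_props_def, THEN conjunct1]
  note A3 = assms(6)[unfolded apva_props_def, THEN conjunct2, THEN conjunct2, THEN conjunct1]
  note A4 = assms(6)[unfolded apva_props_def, THEN conjunct2, THEN conjunct2, THEN conjunct2]
  have cardH: "card (honest n F) \<ge> n - t"
    using assms(2,3) by (simp add: honest_def card_Diff_subset finite_subset)
  have "\<forall>i\<in>honest n F. \<forall>j\<in>honest n F. \<exists>\<tau>. ocior_input n Enc w rbc \<tau> i j \<noteq> None"
  proof (intro ballI)
    fix i j assume "i \<in> honest n F" "j \<in> honest n F"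
    with R3 obtain \<tau> where "rbc \<tau> i j = Some (Enc (w j) j)" by blast
    moreover have "j \<in> {1..n}" using \<open>j \<in> honest n F\<close> by (simp add: honest_def)
    ultimately show "\<exists>\<tau>. ocior_input n Enc w rbc \<tau> i j \<noteq> None"
      by (auto simp: ocior_input_def)
  qed
  moreover have "honest n F \<subseteq> {1..n}" by (auto simp: honest_def)
  ultimately have "\<exists>\<tau>. apva \<tau> i \<noteq> None" using A4 cardH hi by blast
  then obtain \<tau>0 v where v: "apva \<tau>0 i = Some v" by blast
  define S where "S = {j \<in> {1..n}. v j = Some True}"
  show "\<exists>\<tau> out. ocior_output n t Dec rbc apva \<tau> i = Some out"
  proof (cases "card S < t + 1")
    case True
    have "ocior_output n t Dec rbc apva \<tau>0 i = Some None"
      using v True unfolding ocior_output_def S_def by (simp add: Let_def)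
    then show ?thesis by blast
  next
    case False
    define K where "K = smallest (t + 1) S"
    have KS: "K \<subseteq> S" by (auto simp: K_def smallest_def)
    have fK: "finite K" using KS by (rule finite_subset) (auto simp: S_def)
    have ex: "\<forall>j\<in>K. \<exists>\<tau>. rbc \<tau> i j \<noteq> None"
    proof
      fix j assume "j \<in> K"
      then have jS: "j \<in> {1..n}" "v j = Some True" using KS by (auto simp: S_def)
      have "\<exists>i'\<in>honest n F. \<exists>\<tau>'. ocior_input n Enc w rbc \<tau>' i' j = Some True"
        using A3[rule_format, OF hi v, THEN conjunct2, THEN conjunct1, rule_format, OF jS(1)] jS(2) by simp
      then obtain i' \<tau>' where "i' \<in> honest n F" "ocior_input n Enc w rbc \<tau>' i' j = Some True"
        by blast
      then have "rbc \<tau>' i' j \<noteq> None" by (auto simp: ocior_input_def split: if_splits)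
      then show "\<exists>\<tau>. rbc \<tau> i j \<noteq> None" using R4 jS(1) hi \<open>i' \<in> honest n F\<close> by blast
    qed
    have mono: "\<And>j \<tau> \<tau>'. j \<in> K \<Longrightarrow> rbc \<tau> i j \<noteq> None \<Longrightarrow> \<tau> \<le> \<tau>' \<Longrightarrow> rbc \<tau>' i j \<noteq> None"
    proof -
      fix j \<tau> \<tau>' assume "j \<in> K" "rbc \<tau> i j \<noteq> None" "\<tau> \<le> \<tau>'"
      moreover have "j \<in> {1..n}" using \<open>j \<in> K\<close> KS by (auto simp: S_def)
      ultimately show "rbc \<tau>' i j \<noteq> None" using R1 hi by blast
    qed
    have "\<exists>\<tau>\<ge>\<tau>0. \<forall>j\<in>K. rbc \<tau> i j \<noteq> None"
      by (rule finite_sync[OF fK ex]) (rule mono)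
    then obtain \<tau> where tau: "\<tau> \<ge> \<tau>0" "\<forall>j\<in>K. rbc \<tau> i j \<noteq> None" by blast
    have "apva \<tau> i = Some v" using A1 hi v tau(1) by blast
    then show ?thesis using out_eq False tau(2) unfolding S_def K_def by blast
  qed
qed

end
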